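(* Let $\alpha\in(0,1)$ and $\eta>0$, and run the generalized share algorithm with the projection mixing rule $\hat p_{t+1}\in\arg\min_{x\in\Delta_d^\alpha}\mathcal K(x,v_{t+1})$. Then for all $T\ge1$, all loss vectors $\ell_1,\dots,\ell_T\in[0,1]^d$, and all $u_1,\dots,u_T\in\mathbb R_+^d$, \[ \sum_{t=1}^T\|u_t\|_1\,\hat p_t^\top\ell_t-\sum_{t=1}^T u_t^\top\ell_t\le \frac{\|u_1\|_1\ln d}{\eta}+\frac{m(u_1^T)}{\eta}\ln\frac{d}{\alpha}+\Big(\frac{\eta}{8}+\alpha\Big)\sum_{t=1}^T\|u_t\|_1 . \]
   Context: Let $d\ge1$ and $\Delta_d=\{q\in[0,1]^d:\sum_{i=1}^d q_i=1\}$. The generalized share algorithm with learning rate $\eta>0$ and mixing functions $\psi_t:[0,1]^{td}\to\Delta_d$ ($t\ge2$) works as follows: $\hat p_1=v_1=(1/d,\dots,1/d)$. At each round $t=1,2,\dots$ it predicts $\hat p_t=(\hat p_{1,t},\dots,\hat p_{d,t})\in\Delta_d$, observes a loss vector $\ell_t=(\ell_{1,t},\dots,\ell_{d,t})\in[0,1]^d$ (arbitrary), and suffers loss $\hat p_t^\top\ell_t$. It then forms the pre-weights $v_{j,t+1}=\hat p_{j,t}e^{-\eta\ell_{j,t}}/\sum_{i=1}^d\hat p_{i,t}e^{-\eta\ell_{i,t}}$ for $j=1,\dots,d$, sets $v_{t+1}=(v_{1,t+1},\dots,v_{d,t+1})$, and defines $\hat p_{t+1}=\psi_{t+1}(V_{t+1})$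 where $V_{t+1}=[v_{i,s}]_{1\le i\le d,1\le s\le t+1}$ is the $d\times(t+1)$ matrix of all pre-weights so far. Here $\Delta_d^\alpha=[\alpha/d,1]^d\cap\Delta_d$ and $\mathcal K(x,v)=\sum_{i=1}^d x_i\ln(x_i/v_i)$ is the Kullback–Leibler divergence. For $x,y\in\mathbb R_+^d$, $D_{\mathrm{TV}}(x,y)=\sum_{i:\,x_i\ge y_i}(x_i-y_i)$, and for $u_1,\dots,u_T\in\mathbb R_+^d$, $m(u_1^T)=\sum_{t=2}^T D_{\mathrm{TV}}(u_t,u_{t-1})$. *)

theory Defs
  imports Complex_Main
begin

text \<open>Vectors in R^d are represented as functions nat => real; only indices i < d matter.\<close>

definition simplex :: "nat \<Rightarrow> (nat \<Rightarrow> real) set" where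
  "simplex d = {x. (\<forall>i<d. 0 \<le> x i \<and> x i \<le> 1) \<and> (\<Sum>i<d. x i) = 1}"

definition simplex_alpha :: "real \<Rightarrow> nat \<Rightarrow> (nat \<Rightarrow> real) set" where
  "simplex_alpha \<alpha> d = {x \<in> simplex d. \<forall>i<d. \<alpha> / real d \<le> x i}"

definition KL :: "nat \<Rightarrow> (nat \<Rightarrow> real) \<Rightarrow> (nat \<Rightarrow> real) \<Rightarrow> real" where
  "KL d x v = (\<Sum>i<d. if x i = 0 then 0 else x i * ln (x i / v i))"

text \<open>Pre-weights v_{t+1} from prediction p_t and loss l_t.\<close>
definition share_update :: "real \<Rightarrow> nat \<Rightarrow> (nat \<Rightarrow> real) \<Rightarrow> (nat \<Rightarrow> real) \<Rightarrow> (nat \<Rightarrow> real)" where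
  "share_update \<eta> d p l = (\<lambda>j. p j * exp (- \<eta> * l j) / (\<Sum>i<d. p i * exp (- \<eta> * l i)))"

definition norm1 :: "nat \<Rightarrow> (nat \<Rightarrow> real) \<Rightarrow> real" where
  "norm1 d u = (\<Sum>i<d. \<bar>u i\<bar>)"

definition inner_d :: "nat \<Rightarrow> (nat \<Rightarrow> real) \<Rightarrow> (nat \<Rightarrow> real) \<Rightarrow> real" where
  "inner_d d x y = (\<Sum>i<d. x i * y i)"

definition D_TV :: "nat \<Rightarrow> (nat \<Rightarrow> real) \<Rightarrow> (nat \<Rightarrow> real) \<Rightarrow> real" where
  "D_TV d x y = (\<Sum>i\<in>{i. i < d \<and> y i \<le> x i}. x i - y i)"

definition path_m :: "nat \<Rightarrow> (nat \<Rightarrow> nat \<Rightarrow> real) \<Rightarrow> nat \<Rightarrow> real" where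
  "path_m d u T = (\<Sum>t=2..T. D_TV d (u t) (u (t - 1)))"

end

theory Submission imports Defs "HOL-Probability.Hoeffding" begin

lemma exp_convex_bound:
  fixes \<eta> x :: real assumes "\<eta> > 0" "0 \<le> x" "x \<le> 1"
  shows "exp (-\<eta> * x) \<le> (1 - x) + x * exp (-\<eta>)"
proof -
  have "exp (\<eta> * ((1 - x) *\<^sub>R 0 + x *\<^sub>R (-1))) \<le> (1 - x) * exp (\<eta> * 0) + x * exp (\<eta> * (-1))"
    by (rule convex_onD[OF convex_on_exp]) (use assms in auto)
  then show ?thesis by simp
qed

lemma hoeff:
  fixes p ll :: "nat \<Rightarrow> real"
  assumes p: "p \<in> Defs.simplex d" and l: "\<forall>i<d. 0 \<le> ll i \<and> ll i \<le> 1" and eta: "\<eta> > 0"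
  shows "ln (\<Sum>i<d. p i * exp (-\<eta> * ll i)) \<le> -\<eta> * (\<Sum>i<d. p i * ll i) + \<eta>^2/8"
proof -
  define m where "m = (\<Sum>i<d. p i * ll i)"
  have p0: "\<forall>i<d. 0 \<le> p i" and p1: "(\<Sum>i<d. p i) = 1" using p by (auto simp: Defs.simplex_def)
  have m0: "0 \<le> m" unfolding m_def using p0 l by (intro sum_nonneg) auto
  have "m \<le> (\<Sum>i<d. p i)" unfolding m_def using p0 l by (intro sum_mono) (auto intro: mult_left_le)
  hence m1: "m \<le> 1" using p1 by simp
  have "(\<Sum>i<d. p i * exp (-\<eta> * ll i)) \<le> (\<Sum>i<d. p i * ((1 - ll i) + ll i * exp (-\<eta>)))"
    using p0 l eta by (intro sum_mono mult_left_mono exp_convex_bound) auto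
  also have "\<dots> = (\<Sum>i<d. p i) - m + m * exp (-\<eta>)"
  proof -
    have "(\<Sum>i<d. p i * ((1 - ll i) + ll i * exp (-\<eta>))) = (\<Sum>i<d. p i - p i * ll i + (p i * ll i) * exp (-\<eta>))"
      by (intro sum.cong) (auto simp: algebra_simps)
    also have "\<dots> = (\<Sum>i<d. p i) - m + m * exp (-\<eta>)"
      unfolding m_def by (simp add: sum.distrib sum_subtractf sum_distrib_right)
    finally show ?thesis .
  qed
  also have "\<dots> = exp (-\<eta>) * (1 + (1 - m) * (exp \<eta> - 1))"
    using p1 by (simp add: algebra_simps exp_minus field_simps)
  finally have Zle: "(\<Sum>i<d. p i * exp (-\<eta> * ll i)) \<le> exp (-\<eta>) * (1 + (1 - m) * (exp \<eta> - 1))" .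
  have "(\<Sum>i<d. p i * exp (-\<eta>)) \<le> (\<Sum>i<d. p i * exp (-\<eta> * ll i))"
    using p0 l eta by (intro sum_mono mult_left_mono) auto
  hence Zpos: "0 < (\<Sum>i<d. p i * exp (-\<eta> * ll i))" using p1 by (simp add: sum_distrib_right[symmetric])
    (meson exp_gt_zero less_le_trans)
  have pos2: "0 < 1 + (1 - m) * (exp \<eta> - 1)" using m1 eta by (intro add_pos_nonneg) auto
  have "ln (\<Sum>i<d. p i * exp (-\<eta> * ll i)) \<le> ln (exp (-\<eta>) * (1 + (1 - m) * (exp \<eta> - 1)))"
    using Zle Zpos by simp
  also have "\<dots> = -\<eta> + ln (1 + (1 - m) * (exp \<eta> - 1))" using pos2 by (simp add: ln_mult)
  also have "\<dots> \<le> -\<eta> + (\<eta> * (1 - m) + \<eta>^2/8)"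
    using Hoeffdings_lemma_aux[of \<eta> "1 - m"] eta m1 by simp
  finally show ?thesis unfolding m_def by (simp add: algebra_simps)
qed

lemma phi_bound:
  fixes a h b :: real assumes "a > 0" "a + h > 0" "b > 0"
  shows "(a+h) * ln ((a+h)/b) - a * ln (a/b) \<le> h * (ln a - ln b) + h + h^2/a"
proof -
  have "ln ((a+h)/a) \<le> (a+h)/a - 1" using assms by (intro ln_le_minus_one) auto
  hence "ln (a+h) - ln a \<le> h/a" using assms by (simp add: ln_div field_simps)
  hence "(a+h) * (ln (a+h) - ln a) \<le> (a+h) * (h/a)" using assms by (intro mult_left_mono) auto
  moreover have "(a+h) * (h/a) = h + h^2/a" using assms by (simp add: field_simps power2_eq_square)
  moreover have "(a+h) * ln ((a+h)/b) - a * ln (a/b) = (a+h) * (ln (a+h) - ln a) + h * (ln a - ln b)"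
    using assms by (simp add: ln_div algebra_simps)
  ultimately show ?thesis by linarith
qed

lemma small_eps:
  fixes D C :: real assumes "C \<ge> 0" "\<And>e. 0 < e \<Longrightarrow> e \<le> 1 \<Longrightarrow> 0 \<le> D + e * C"
  shows "D \<ge> 0"
proof (rule ccontr)
  assume "\<not> D \<ge> 0" hence D: "D < 0" by simp
  define e where "e = min 1 (-D / (2*(C+1)))"
  have e0: "0 < e" using D assms(1) by (auto simp: e_def divide_neg_pos)
  have e1: "e \<le> 1" by (simp add: e_def)
  have "e * C \<le> (-D / (2*(C+1))) * C" using assms(1) by (intro mult_right_mono) (auto simp: e_def)
  also have "\<dots> \<le> -D/2"
  proof -
    have "(-D / (2*(C+1))) * C = (-D/2) * (C/(C+1))" using assms(1) by (simp add: field_simps)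
    also have "\<dots> \<le> (-D/2) * 1" using D assms(1) by (intro mult_left_mono) auto
    finally show ?thesis by simp
  qed
  finally have "D + e * C < 0" using D by linarith
  with assms(2)[OF e0 e1] show False by linarith
qed

lemma proj:
  fixes v q x :: "nat \<Rightarrow> real"
  assumes d: "d \<ge> 1" and al: "\<alpha> > 0"
    and vpos: "\<forall>i<d. 0 < v i" and vsum: "(\<Sum>i<d. v i) = 1"
    and q: "is_arg_min (\<lambda>x. KL d x v) (\<lambda>x. x \<in> simplex_alpha \<alpha> d) q"
    and x: "x \<in> simplex_alpha \<alpha> d"
  shows "(\<Sum>i<d. x i * ln (v i)) \<le> (\<Sum>i<d. x i * ln (q i))"
proof -
  have qa: "q \<in> simplex_alpha \<alpha> d" and qmin: "\<And>y. y \<in> simplex_alpha \<alpha> d \<Longrightarrow> KL d q v \<le> KL d y v"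
    using q by (auto simp: is_arg_min_def not_less)
  have ad: "0 < \<alpha> / real d" using d al by simp
  have qpos: "\<forall>i<d. 0 < q i" and qsum: "(\<Sum>i<d. q i) = 1"
    using qa ad by (auto simp: simplex_alpha_def Defs.simplex_def intro: less_le_trans)
  have xpos: "\<forall>i<d. 0 < x i" and xsum: "(\<Sum>i<d. x i) = 1"
    using x ad by (auto simp: simplex_alpha_def Defs.simplex_def intro: less_le_trans)
  define w where "w i = x i - q i" for i
  have wsum: "(\<Sum>i<d. w i) = 0" using xsum qsum by (simp add: w_def sum_subtractf)
  define D where "D = (\<Sum>i<d. w i * (ln (q i) - ln (v i)))"
  define C where "C = (\<Sum>i<d. (w i)^2 / q i)"
  have C0: "C \<ge> 0" unfolding C_def using qpos by (intro sum_nonneg) auto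
  have KLpos: "KL d y v = (\<Sum>i<d. y i * ln (y i / v i))" if "\<forall>i<d. 0 < y i" for y
    unfolding KL_def using that by (intro sum.cong) auto
  have "0 \<le> D + e * C" if e0: "0 < e" and e1: "e \<le> 1" for e
  proof -
    define y where "y i = q i + e * w i" for i
    have yconv: "y i = (1 - e) * q i + e * x i" for i by (simp add: y_def w_def algebra_simps)
    have ylow: "\<alpha> / real d \<le> y i" if "i < d" for i
    proof -
      have "\<alpha> / real d = (1 - e) * (\<alpha> / real d) + e * (\<alpha> / real d)"
        using ring_class.ring_distribs(1) by (metis (no_types) add_diff_cancel_left' diff_add_cancel left_diff_distrib mult_1)
      also have "\<dots> \<le> (1 - e) * q i + e * x i"
        using qa x that e0 e1 by (intro add_mono mult_left_mono) (auto simp: simplex_alpha_def)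
      finally show ?thesis by (simp add: yconv)
    qed
    have yup: "y i \<le> 1" if "i < d" for i
    proof -
      have "(1 - e) * q i + e * x i \<le> (1 - e) * 1 + e * 1"
        using qa x that e0 e1 by (intro add_mono mult_left_mono) (auto simp: simplex_alpha_def Defs.simplex_def)
      thus ?thesis by (simp add: yconv)
    qed
    have ysum: "(\<Sum>i<d. y i) = 1" using qsum wsum by (simp add: y_def sum.distrib sum_distrib_left[symmetric])
    have ya: "y \<in> simplex_alpha \<alpha> d"
      using ylow yup ysum ad unfolding simplex_alpha_def Defs.simplex_def by (auto intro: order_trans[of 0 "\<alpha> / real d"])
    have ypos: "\<forall>i<d. 0 < y i" using ylow ad by (auto intro: less_le_trans)
    have "KL d q v \<le> KL d y v" by (rule qmin[OF ya])
    hence "0 \<le> (\<Sum>i<d. y i * ln (y i / v i)) - (\<Sum>i<d. q i * ln (q i / v i))"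
      using KLpos[OF ypos] KLpos[OF qpos] by simp
    also have "\<dots> = (\<Sum>i<d. (q i + e * w i) * ln ((q i + e * w i) / v i) - q i * ln (q i / v i))"
      by (simp add: y_def sum_subtractf)
    also have "\<dots> \<le> (\<Sum>i<d. (e * w i) * (ln (q i) - ln (v i)) + e * w i + (e * w i)^2 / q i)"
      using qpos vpos ypos by (intro sum_mono phi_bound) (auto simp: y_def)
    also have "\<dots> = (\<Sum>i<d. e * (w i * (ln (q i) - ln (v i))) + e * w i + e^2 * ((w i)^2 / q i))"
      by (intro sum.cong) (auto simp: power_mult_distrib algebra_simps)
    also have "\<dots> = e * D + e * (\<Sum>i<d. w i) + e^2 * C"
      unfolding D_def C_def by (simp add: sum.distrib sum_distrib_left)
    also have "\<dots> = e * (D + e * C)" using wsum by (simp add: algebra_simps power2_eq_square)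
    finally show ?thesis using e0 by (simp add: zero_le_mult_iff)
  qed
  hence D0: "D \<ge> 0" using small_eps[OF C0] by blast
  have gibbs: "0 \<le> (\<Sum>i<d. q i * (ln (q i) - ln (v i)))"
  proof -
    have "(\<Sum>i<d. q i - v i) \<le> (\<Sum>i<d. q i * (ln (q i) - ln (v i)))"
    proof (intro sum_mono)
      fix i assume i: "i \<in> {..<d}"
      have qi: "q i > 0" and vi: "v i > 0" using qpos vpos i by auto
      have "ln (v i / q i) \<le> v i / q i - 1" using qi vi by (intro ln_le_minus_one) auto
      hence "q i * ln (v i / q i) \<le> q i * (v i / q i - 1)" using qi by (intro mult_left_mono) auto
      moreover have "q i * (v i / q i - 1) = v i - q i" using qi by (simp add: field_simps)
      moreover have "q i * ln (v i / q i) = - (q i * (ln (q i) - ln (v i)))" using qi vi by (simp add: ln_div algebra_simps)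
      ultimately show "q i - v i \<le> q i * (ln (q i) - ln (v i))" by linarith
    qed
    thus ?thesis using qsum vsum by (simp add: sum_subtractf)
  qed
  have "(\<Sum>i<d. x i * ln (q i)) - (\<Sum>i<d. x i * ln (v i)) = D + (\<Sum>i<d. q i * (ln (q i) - ln (v i)))"
    unfolding D_def w_def by (simp add: sum_subtractf[symmetric] sum.distrib[symmetric] algebra_simps)
  thus ?thesis using D0 gibbs by linarith
qed

lemma dtv_alt: "D_TV d x y = (\<Sum>i<d. max (x i - y i) 0)"
proof -
  have "{i. i < d \<and> y i \<le> x i} = {i \<in> {..<d}. y i \<le> x i}" by auto
  hence "D_TV d x y = (\<Sum>i\<in>{i \<in> {..<d}. y i \<le> x i}. x i - y i)" by (simp add: D_TV_def)
  also have "\<dots> = (\<Sum>i<d. if y i \<le> x i then x i - y i else 0)"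
    using sum.inter_filter[of "{..<d}" "\<lambda>i. x i - y i" "\<lambda>i. y i \<le> x i"] by simp
  also have "\<dots> = (\<Sum>i<d. max (x i - y i) 0)" by (intro sum.cong) auto
  finally show ?thesis .
qed

lemma dtv_bound:
  assumes "\<forall>i<d. 0 \<le> c i \<and> c i \<le> M"
  shows "(\<Sum>i<d. (x i - y i) * c i) \<le> D_TV d x y * M"
proof -
  have "(\<Sum>i<d. (x i - y i) * c i) \<le> (\<Sum>i<d. max (x i - y i) 0 * M)"
  proof (intro sum_mono)
    fix i assume "i \<in> {..<d}"
    hence c: "0 \<le> c i" "c i \<le> M" using assms by auto
    show "(x i - y i) * c i \<le> max (x i - y i) 0 * M"
    proof (cases "x i - y i \<ge> 0")
      case True thus ?thesis using c by (simp add: mult_left_mono)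
    next
      case False thus ?thesis using c by (simp add: mult_nonpos_nonneg)
    qed
  qed
  thus ?thesis by (simp add: dtv_alt sum_distrib_right)
qed

lemma dtv_contract:
  fixes a b :: "nat \<Rightarrow> real" and \<alpha> :: real
  assumes d: "d \<ge> 1" and al: "0 \<le> \<alpha>" "\<alpha> \<le> 1"
  shows "D_TV d (\<lambda>i. (1 - \<alpha>) * a i + \<alpha> * (\<Sum>j<d. a j) / real d)
               (\<lambda>i. (1 - \<alpha>) * b i + \<alpha> * (\<Sum>j<d. b j) / real d) \<le> D_TV d a b"
proof -
  define s where "s = (\<Sum>j<d. a j) - (\<Sum>j<d. b j)"
  have "D_TV d (\<lambda>i. (1 - \<alpha>) * a i + \<alpha> * (\<Sum>j<d. a j) / real d)
               (\<lambda>i. (1 - \<alpha>) * b i + \<alpha> * (\<Sum>j<d. b j) / real d)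
      = (\<Sum>i<d. max ((1 - \<alpha>) * (a i - b i) + \<alpha> * (s / real d)) 0)"
    unfolding dtv_alt s_def by (intro sum.cong) (auto simp: algebra_simps diff_divide_distrib)
  also have "\<dots> \<le> (\<Sum>i<d. (1 - \<alpha>) * max (a i - b i) 0 + \<alpha> * (max s 0 / real d))"
  proof (intro sum_mono)
    fix i
    have m1: "(1 - \<alpha>) * (a i - b i) \<le> (1 - \<alpha>) * max (a i - b i) 0" using al by (intro mult_left_mono) auto
    have m2: "\<alpha> * (s / real d) \<le> \<alpha> * (max s 0 / real d)" using al by (intro mult_left_mono divide_right_mono) auto
    have m3: "0 \<le> (1 - \<alpha>) * max (a i - b i) 0" "0 \<le> \<alpha> * (max s 0 / real d)" using al by auto
    show "max ((1 - \<alpha>) * (a i - b i) + \<alpha> * (s / real d)) 0 \<le> (1 - \<alpha>) * max (a i - b i) 0 + \<alpha> * (max s 0 / real d)"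
      using m1 m2 m3 by linarith
  qed
  also have "\<dots> = (1 - \<alpha>) * D_TV d a b + \<alpha> * max s 0"
    using d by (simp add: sum.distrib sum_distrib_left[symmetric] dtv_alt)
  also have "\<dots> \<le> (1 - \<alpha>) * D_TV d a b + \<alpha> * D_TV d a b"
  proof -
    have "s \<le> D_TV d a b" unfolding s_def dtv_alt by (simp add: sum_subtractf[symmetric] sum_mono)
    moreover have "0 \<le> D_TV d a b" unfolding dtv_alt by (intro sum_nonneg) auto
    ultimately show ?thesis using al by (intro add_left_mono mult_left_mono) auto
  qed
  finally show ?thesis by (simp add: algebra_simps)
qed

theorem theorem1:
  fixes d T :: nat and \<alpha> \<eta> :: real
    and p l u :: "nat \<Rightarrow> nat \<Rightarrow> real"
  assumes "d \<ge> 1"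
    and "0 < \<alpha>" and "\<alpha> < 1"
    and "\<eta> > 0"
    and "T \<ge> 1"
    and "\<And>t i. t \<in> {1..T} \<Longrightarrow> i < d \<Longrightarrow> 0 \<le> l t i \<and> l t i \<le> 1"
    and "\<And>t i. t \<in> {1..T} \<Longrightarrow> i < d \<Longrightarrow> 0 \<le> u t i"
    and "\<And>i. i < d \<Longrightarrow> p 1 i = 1 / real d"
    and "\<And>t. 1 \<le> t \<Longrightarrow> t < T \<Longrightarrow>
           is_arg_min (\<lambda>x. KL d x (share_update \<eta> d (p t) (l t)))
                      (\<lambda>x. x \<in> simplex_alpha \<alpha> d) (p (Suc t))"
  shows "(\<Sum>t=1..T. norm1 d (u t) * inner_d d (p t) (l t)) - (\<Sum>t=1..T. inner_d d (u t) (l t))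
         \<le> norm1 d (u 1) * ln (real d) / \<eta>
           + path_m d u T / \<eta> * ln (real d / \<alpha>)
           + (\<eta> / 8 + \<alpha>) * (\<Sum>t=1..T. norm1 d (u t))"
proof -
  note d = assms(1) and al0 = assms(2) and al1 = assms(3) and eta = assms(4) and T1 = assms(5)
    and lb = assms(6) and u0 = assms(7) and p1 = assms(8) and amin = assms(9)
  have ad: "0 < \<alpha> / real d" using d al0 by simp
  define v where "v t = share_update \<eta> d (p t) (l t)" for t
  define N where "N t = (\<Sum>j<d. u t j)" for t
  define ua where "ua t i = (1 - \<alpha>) * u t i + \<alpha> * N t / real d" for t i
  define A where "A t = (\<Sum>i<d. ua t i * ln (p t i))" for t
  define B where "B t = (\<Sum>i<d. ua t i * ln (v t i))" for t
  define C where "C t = (\<Sum>i<d. ua t i * ln (p (Suc t) i))" for t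
  have ua_fun: "ua = (\<lambda>t i. (1 - \<alpha>) * u t i + \<alpha> * (\<Sum>j<d. u t j) / real d)"
    by (simp add: fun_eq_iff ua_def N_def)
  have Nnorm: "norm1 d (u t) = N t" if "t \<in> {1..T}" for t
    unfolding norm1_def N_def using u0[OF that] by (intro sum.cong) auto
  have N0: "0 \<le> N t" if "t \<in> {1..T}" for t
    unfolding N_def using u0[OF that] by (intro sum_nonneg) auto
  have ua0: "0 \<le> ua t i" if "t \<in> {1..T}" "i < d" for t i
    unfolding ua_def using u0[OF that] N0[OF that(1)] al0 al1 d by auto
  have uasum: "(\<Sum>i<d. ua t i) = N t" for t
  proof -
    have "(\<Sum>i<d. ua t i) = (1 - \<alpha>) * N t + real d * (\<alpha> * N t / real d)"
      unfolding ua_def N_def by (simp add: sum.distrib sum_distrib_left[symmetric])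
    thus ?thesis using d by (simp add: algebra_simps)
  qed
  have pa: "p t \<in> simplex_alpha \<alpha> d" if tT: "t \<in> {1..T}" for t
  proof (cases "t = 1")
    case True
    have "\<alpha> / real d \<le> 1 / real d" using al1 d by (simp add: divide_right_mono)
    moreover have "1 / real d \<le> 1" using d by simp
    moreover have "(\<Sum>i<d. p 1 i) = 1" using p1 d by simp
    ultimately show ?thesis using True p1 d unfolding simplex_alpha_def Defs.simplex_def by auto
  next
    case False
    then obtain s where s: "t = Suc s" "1 \<le> s" "s < T" using tT by (cases t) auto
    show ?thesis using amin[OF s(2,3)] s(1) by (simp add: is_arg_min_def)
  qed
  have ppos: "0 < p t i" "p t i \<le> 1" "\<alpha> / real d \<le> p t i" if "t \<in> {1..T}" "i < d" for t i
    using pa[OF that(1)] that(2) ad unfolding simplex_alpha_def Defs.simplex_def by (auto intro: less_le_trans)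
  have psimp: "p t \<in> Defs.simplex d" if "t \<in> {1..T}" for t using pa[OF that] by (simp add: simplex_alpha_def)
  define Z where "Z t = (\<Sum>i<d. p t i * exp (- \<eta> * l t i))" for t
  have Zpos: "0 < Z t" if "t \<in> {1..T}" for t
    unfolding Z_def using ppos[OF that] d by (intro sum_pos) (auto simp: lessThan_empty_iff)
  have vdef: "v t i = p t i * exp (- \<eta> * l t i) / Z t" for t i by (simp add: v_def share_update_def Z_def)
  have vpos: "0 < v t i" if "t \<in> {1..T}" "i < d" for t i
    using ppos[OF that] Zpos[OF that(1)] by (simp add: vdef)
  have vsum: "(\<Sum>i<d. v t i) = 1" if "t \<in> {1..T}" for t
    using Zpos[OF that] by (simp add: vdef sum_divide_distrib[symmetric] Z_def)
  have vle: "v t i \<le> 1" if "t \<in> {1..T}" "i < d" for t i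
  proof -
    have "v t i \<le> (\<Sum>j<d. v t j)" using vpos[OF that(1)] that(2)
      by (intro member_le_sum) (auto intro: less_imp_le)
    thus ?thesis using vsum[OF that(1)] by simp
  qed
  have lnv: "ln (v t i) = ln (p t i) - \<eta> * l t i - ln (Z t)" if "t \<in> {1..T}" "i < d" for t i
    using ppos[OF that] Zpos[OF that(1)] by (simp add: vdef ln_div ln_mult)
  have step: "N t * inner_d d (p t) (l t) - inner_d d (u t) (l t) \<le> (B t - A t) / \<eta> + N t * (\<eta>/8 + \<alpha>)"
    if t: "t \<in> {1..T}" for t
  proof -
    define m where "m = inner_d d (p t) (l t)"
    define L where "L = inner_d d (u t) (l t)"
    have hz: "ln (Z t) \<le> - \<eta> * m + \<eta>^2/8"
      unfolding Z_def m_def inner_d_def using hoeff[OF psimp[OF t] _ eta, of "l t"] lb[OF t] by auto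
    have "B t - A t = (\<Sum>i<d. ua t i * (- \<eta> * l t i - ln (Z t)))"
      unfolding B_def A_def sum_subtractf[symmetric]
      by (intro sum.cong refl) (simp add: lnv[OF t] algebra_simps)
    also have "\<dots> = - \<eta> * (\<Sum>i<d. ua t i * l t i) - N t * ln (Z t)"
      by (simp add: algebra_simps sum_subtractf sum_distrib_left sum_distrib_right uasum[symmetric])
    finally have BA: "B t - A t = - \<eta> * (\<Sum>i<d. ua t i * l t i) - N t * ln (Z t)" .
    have L0: "0 \<le> L" unfolding L_def inner_d_def using u0[OF t] lb[OF t] by (intro sum_nonneg) auto
    have lsum: "(\<Sum>i<d. l t i) \<le> real d"
    proof -
      have "(\<Sum>i<d. l t i) \<le> (\<Sum>i<d. (1::real))" using lb[OF t] by (intro sum_mono) auto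
      thus ?thesis by simp
    qed
    have "(\<Sum>i<d. ua t i * l t i) = (\<Sum>i<d. (1 - \<alpha>) * (u t i * l t i) + \<alpha> * N t / real d * l t i)"
      unfolding ua_def by (intro sum.cong refl) (simp add: algebra_simps)
    also have "\<dots> = (1 - \<alpha>) * L + \<alpha> * N t / real d * (\<Sum>i<d. l t i)"
      unfolding L_def inner_d_def by (simp add: sum.distrib sum_distrib_left)
    also have "\<dots> \<le> (1 - \<alpha>) * L + \<alpha> * N t / real d * real d"
      using lsum N0[OF t] al0 by (intro add_left_mono mult_left_mono) auto
    also have "\<dots> \<le> L + \<alpha> * N t" using d L0 al0 by (simp add: algebra_simps)
    finally have ual: "(\<Sum>i<d. ua t i * l t i) \<le> L + \<alpha> * N t" .
    have "N t * ln (Z t) \<le> N t * (- \<eta> * m + \<eta>^2/8)" using hz N0[OF t] by (intro mult_left_mono)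
    hence "B t - A t \<ge> - \<eta> * (L + \<alpha> * N t) - N t * (- \<eta> * m + \<eta>^2/8)"
    proof -
      have "\<eta> * (\<Sum>i<d. ua t i * l t i) \<le> \<eta> * (L + \<alpha> * N t)" using ual eta by (intro mult_left_mono) auto
      thus ?thesis using BA \<open>N t * ln (Z t) \<le> _\<close> by linarith
    qed
    hence "(B t - A t) / \<eta> \<ge> (- \<eta> * (L + \<alpha> * N t) - N t * (- \<eta> * m + \<eta>^2/8)) / \<eta>"
      using eta by (intro divide_right_mono) auto
    also have "(- \<eta> * (L + \<alpha> * N t) - N t * (- \<eta> * m + \<eta>^2/8)) / \<eta>
       = N t * m - L - N t * (\<eta>/8 + \<alpha>)" using eta by (simp add: field_simps power2_eq_square)
    finally show ?thesis unfolding m_def L_def by simp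
  qed
  have BC: "B t \<le> C t" if t: "1 \<le> t" "t < T" for t
  proof -
    have tT: "t \<in> {1..T}" using t by auto
    have vs: "\<forall>i<d. 0 < v t i" using vpos[OF tT] by auto
    show ?thesis
    proof (cases "N t = 0")
      case True
      have "\<forall>i\<in>{..<d}. u t i = 0" using True u0[OF tT] unfolding N_def
        by (subst sum_nonneg_eq_0_iff[symmetric]) auto
      hence "\<forall>i<d. ua t i = 0" using True by (simp add: ua_def)
      thus ?thesis by (simp add: B_def C_def)
    next
      case False
      hence Np: "0 < N t" using N0[OF tT] by simp
      define x where "x i = ua t i / N t" for i
      have xlow: "\<alpha> / real d \<le> x i" if "i < d" for i
      proof -
        have "x i = (1 - \<alpha>) * u t i / N t + \<alpha> / real d" using Np by (simp add: x_def ua_def add_divide_distrib)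
        moreover have "0 \<le> (1 - \<alpha>) * u t i / N t" using u0[OF tT that] al1 Np by auto
        ultimately show ?thesis by simp
      qed
      have xsum: "(\<Sum>i<d. x i) = 1" using Np by (simp add: x_def sum_divide_distrib[symmetric] uasum)
      have xle: "x i \<le> 1" if "i < d" for i
      proof -
        have "x i \<le> (\<Sum>j<d. x j)" using xlow ad that
          by (intro member_le_sum) (auto intro: order_trans[of 0 "\<alpha> / real d"])
        thus ?thesis using xsum by simp
      qed
      have xa: "x \<in> simplex_alpha \<alpha> d" using xlow xle xsum ad unfolding simplex_alpha_def Defs.simplex_def
        by (auto intro: order_trans[of 0 "\<alpha> / real d"])
      have pr: "(\<Sum>i<d. x i * ln (v t i)) \<le> (\<Sum>i<d. x i * ln (p (Suc t) i))"
        by (rule proj[OF d al0 vs vsum[OF tT] _ xa]) (use amin[OF t] in \<open>simp add: v_def\<close>)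
      have "B t = N t * (\<Sum>i<d. x i * ln (v t i))" using Np
        by (simp add: B_def x_def sum_distrib_left)
      also have "\<dots> \<le> N t * (\<Sum>i<d. x i * ln (p (Suc t) i))" using pr Np by (intro mult_left_mono) auto
      also have "\<dots> = C t" using Np by (simp add: C_def x_def sum_distrib_left)
      finally show ?thesis .
    qed
  qed
  have BT: "B T \<le> 0"
  proof -
    have TT: "T \<in> {1..T}" using T1 by auto
    show ?thesis unfolding B_def using ua0[OF TT] vpos[OF TT] vle[OF TT]
      by (intro sum_nonpos) (auto intro: mult_nonneg_nonpos)
  qed
  have A1: "A 1 = - N 1 * ln (real d)"
  proof -
    have "A 1 = (\<Sum>i<d. ua 1 i) * ln (1 / real d)" unfolding A_def using p1 by (simp add: sum_distrib_right)
    thus ?thesis using d by (simp add: uasum ln_div)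
  qed
  have lnda: "0 \<le> ln (real d / \<alpha>)" using d al0 al1 by simp
  have CA: "C (t - 1) - A t \<le> D_TV d (u t) (u (t - 1)) * ln (real d / \<alpha>)" if t: "t \<in> {2..T}" for t
  proof -
    have tT: "t \<in> {1..T}" using t by auto
    have c: "\<forall>i<d. 0 \<le> - ln (p t i) \<and> - ln (p t i) \<le> ln (real d / \<alpha>)"
    proof (intro allI impI)
      fix i assume i: "i < d"
      have "ln (\<alpha> / real d) \<le> ln (p t i)" using ppos[OF tT i] ad by simp
      moreover have "ln (\<alpha> / real d) = - ln (real d / \<alpha>)" using d al0 by (simp add: ln_div)
      moreover have "ln (p t i) \<le> 0" using ppos[OF tT i] by simp
      ultimately show "0 \<le> - ln (p t i) \<and> - ln (p t i) \<le> ln (real d / \<alpha>)" by linarith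
    qed
    have "C (t - 1) - A t = (\<Sum>i<d. (ua t i - ua (t - 1) i) * (- ln (p t i)))"
      using t by (simp add: C_def A_def sum_subtractf[symmetric] algebra_simps)
    also have "\<dots> \<le> D_TV d (ua t) (ua (t - 1)) * ln (real d / \<alpha>)" by (rule dtv_bound[OF c])
    also have "\<dots> \<le> D_TV d (u t) (u (t - 1)) * ln (real d / \<alpha>)"
      using dtv_contract[OF d, of \<alpha> "u t" "u (t - 1)"] al0 al1 lnda
      by (intro mult_right_mono) (auto simp: ua_fun)
    finally show ?thesis .
  qed
  obtain T' where T': "T = Suc T'" using T1 by (cases T) auto
  have sumB: "(\<Sum>t=1..T. B t) \<le> (\<Sum>t=1..T'. C t)"
  proof -
    have "(\<Sum>t=1..T. B t) = (\<Sum>t=1..T'. B t) + B T" using T' by simp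
    also have "\<dots> \<le> (\<Sum>t=1..T'. C t) + 0" using BT BC T' by (intro add_mono sum_mono) auto
    finally show ?thesis by simp
  qed
  have sumC: "(\<Sum>t=1..T'. C t) = (\<Sum>t=2..T. C (t - 1))"
    using T' sum.shift_bounds_cl_Suc_ivl[of "\<lambda>t. C (t - 1)" 1 T'] by (simp add: numeral_2_eq_2)
  have sumA: "(\<Sum>t=1..T. A t) = A 1 + (\<Sum>t=2..T. A t)"
    using T1 sum.atLeast_Suc_atMost[of 1 T A] by (simp add: numeral_2_eq_2)
  have "(\<Sum>t=1..T. B t) - (\<Sum>t=1..T. A t) \<le> N 1 * ln (real d) + (\<Sum>t=2..T. C (t - 1) - A t)"
    using sumB sumC sumA A1 by (simp add: sum_subtractf)
  also have "(\<Sum>t=2..T. C (t - 1) - A t) \<le> (\<Sum>t=2..T. D_TV d (u t) (u (t - 1)) * ln (real d / \<alpha>))"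
    using CA by (intro sum_mono) auto
  also have "\<dots> = path_m d u T * ln (real d / \<alpha>)" by (simp add: path_m_def sum_distrib_right)
  finally have tele: "(\<Sum>t=1..T. B t - A t) \<le> N 1 * ln (real d) + path_m d u T * ln (real d / \<alpha>)"
    by (simp add: sum_subtractf)
  have "(\<Sum>t=1..T. norm1 d (u t) * inner_d d (p t) (l t)) - (\<Sum>t=1..T. inner_d d (u t) (l t))
      = (\<Sum>t=1..T. N t * inner_d d (p t) (l t) - inner_d d (u t) (l t))"
    using Nnorm by (simp add: sum_subtractf)
  also have "\<dots> \<le> (\<Sum>t=1..T. (B t - A t) / \<eta> + N t * (\<eta>/8 + \<alpha>))"
    using step by (intro sum_mono) auto
  also have "\<dots> = (\<Sum>t=1..T. B t - A t) / \<eta> + (\<eta>/8 + \<alpha>) * (\<Sum>t=1..T. N t)"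
    by (simp add: sum.distrib sum_divide_distrib[symmetric] sum_distrib_right mult.commute)
  also have "\<dots> \<le> (N 1 * ln (real d) + path_m d u T * ln (real d / \<alpha>)) / \<eta> + (\<eta>/8 + \<alpha>) * (\<Sum>t=1..T. N t)"
    using tele eta by (intro add_right_mono divide_right_mono) auto
  also have "\<dots> = norm1 d (u 1) * ln (real d) / \<eta>
           + path_m d u T / \<eta> * ln (real d / \<alpha>)
           + (\<eta> / 8 + \<alpha>) * (\<Sum>t=1..T. norm1 d (u t))"
    using Nnorm T1 by (simp add: add_divide_distrib)
  finally show ?thesis .
qed

end
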